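(* Let $\mathcal{X}=\{x_k\}_{k=1}^m$ be a frame for $\mathbb{C}^n$. Then the following are equivalent: (1) $\mathcal{X}$ is injective; (2) the vectors $\{\tilde{x}_k\}_{k=1}^m$ span $\mathbb{R}^{n^2}$.
   Context: A family $\{x_k\}$ of vectors in a Hilbert space is called injective if whenever a self-adjoint operator $T$ satisfies $\langle Tx_k,x_k\rangle=0$ for all $k$, then $T=0$. For $x=(x_1,\dots,x_n)\in\mathbb{C}^n$ define $\tilde{x}\in\mathbb{R}^{n^2}$ by $\tilde{x}=(|x_1|^2,\mathrm{Re}(\bar{x}_1x_2),\mathrm{Im}(\bar{x}_1x_2),\dots,\mathrm{Re}(\bar{x}_1x_n),\mathrm{Im}(\bar{x}_1x_n);\ |x_2|^2,\mathrm{Re}(\bar{x}_2x_3),\mathrm{Im}(\bar{x}_2x_3),\dots,\mathrm{Re}(\bar{x}_2x_n),\mathrm{Im}(\bar{x}_2x_n);\ \dots;\ |x_{n-1}|^2,\mathrm{Re}(\bar{x}_{n-1}x_n),\mathrm{Im}(\bar{x}_{n-1}x_n);\ |x_n|^2)$. *)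

theory Defs
  imports "HOL-Analysis.Analysis"
begin

text \<open>Vectors of C^n are functions nat => complex, only coordinates
  i < n (0-based) being relevant. A family {x_k}, k = 1..m, is a function
  x :: nat => nat => complex, with x k the k-th vector (0-based, k < m).
  Operators on C^n are n x n complex matrices T :: nat => nat => complex
  (entries T i j, i, j < n). Vectors of R^(n^2) are functions nat => real
  supported on {0..<n^2}.\<close>

definition cinner_n :: "nat \<Rightarrow> (nat \<Rightarrow> complex) \<Rightarrow> (nat \<Rightarrow> complex) \<Rightarrow> complex" where
  "cinner_n n u v = (\<Sum>i<n. u i * cnj (v i))"

definition cnorm2_n :: "nat \<Rightarrow> (nat \<Rightarrow> complex) \<Rightarrow> real" where
  "cnorm2_n n u = (\<Sum>i<n. (cmod (u i))\<^sup>2)"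

definition is_frame :: "nat \<Rightarrow> nat \<Rightarrow> (nat \<Rightarrow> nat \<Rightarrow> complex) \<Rightarrow> bool" where
  "is_frame n m x \<longleftrightarrow> (\<exists>A B. 0 < A \<and> A \<le> B \<and>
     (\<forall>y. A * cnorm2_n n y \<le> (\<Sum>k<m. (cmod (cinner_n n y (x k)))\<^sup>2) \<and>
          (\<Sum>k<m. (cmod (cinner_n n y (x k)))\<^sup>2) \<le> B * cnorm2_n n y))"

definition mat_apply :: "nat \<Rightarrow> (nat \<Rightarrow> nat \<Rightarrow> complex) \<Rightarrow> (nat \<Rightarrow> complex) \<Rightarrow> (nat \<Rightarrow> complex)" where
  "mat_apply n T u = (\<lambda>i. \<Sum>j<n. T i j * u j)"

definition self_adjoint_n :: "nat \<Rightarrow> (nat \<Rightarrow> nat \<Rightarrow> complex) \<Rightarrow> bool" where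
  "self_adjoint_n n T \<longleftrightarrow> (\<forall>i<n. \<forall>j<n. T i j = cnj (T j i))"

definition injective_family :: "nat \<Rightarrow> nat \<Rightarrow> (nat \<Rightarrow> nat \<Rightarrow> complex) \<Rightarrow> bool" where
  "injective_family n m x \<longleftrightarrow>
     (\<forall>T. self_adjoint_n n T \<longrightarrow> (\<forall>k<m. cinner_n n (mat_apply n T (x k)) (x k) = 0)
          \<longrightarrow> (\<forall>i<n. \<forall>j<n. T i j = 0))"

text \<open>Coordinates of x-tilde (0-based). The block belonging to index i starts at
  i*(2n-i); it contains |x_i|^2 followed by Re(conj x_i x_j), Im(conj x_i x_j), j = i+1..n-1.\<close>
definition diag_pos :: "nat \<Rightarrow> nat \<Rightarrow> nat" where
  "diag_pos n i = i * (2 * n - i)"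

definition re_pos :: "nat \<Rightarrow> nat \<Rightarrow> nat \<Rightarrow> nat" where
  "re_pos n i j = diag_pos n i + 2 * (j - i) - 1"

definition im_pos :: "nat \<Rightarrow> nat \<Rightarrow> nat \<Rightarrow> nat" where
  "im_pos n i j = diag_pos n i + 2 * (j - i)"

definition xtilde :: "nat \<Rightarrow> (nat \<Rightarrow> complex) \<Rightarrow> nat \<Rightarrow> real" where
  "xtilde n u p = (\<Sum>i<n. (if p = diag_pos n i then (cmod (u i))\<^sup>2 else 0)
      + (\<Sum>j\<in>{i<..<n}. (if p = re_pos n i j then Re (cnj (u i) * u j) else 0)
                      + (if p = im_pos n i j then Im (cnj (u i) * u j) else 0)))"

definition spans_Rn2 :: "nat \<Rightarrow> nat \<Rightarrow> (nat \<Rightarrow> nat \<Rightarrow> real) \<Rightarrow> bool" where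
  "spans_Rn2 n m v \<longleftrightarrow> (\<forall>w::nat \<Rightarrow> real. (\<forall>p\<ge>n^2. w p = 0) \<longrightarrow>
      (\<exists>c::nat \<Rightarrow> real. \<forall>p<n^2. w p = (\<Sum>k<m. c k * v k p)))"

end

theory Submission
  imports Defs "Jordan_Normal_Form.Determinant"
begin

no_notation Finite_Cartesian_Product.vec_nth (infixl "$" 90)

lemma LA:
  fixes v :: "nat \<Rightarrow> nat \<Rightarrow> real" and w :: "nat \<Rightarrow> real"
  assumes H: "\<forall>t. (\<forall>k<m. (\<Sum>p<N. t p * v k p) = 0) \<longrightarrow> (\<forall>p<N. t p = 0)"
  shows "\<exists>c. \<forall>p<N. w p = (\<Sum>k<m. c k * v k p)"
proof -
  define G :: "real mat" where "G = mat N N (\<lambda>(p,q). \<Sum>k<m. v k p * v k q)"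
  have G: "G \<in> carrier_mat N N" unfolding G_def by simp
  have Gv: "(G *\<^sub>v z) $ p = (\<Sum>q<N. (\<Sum>k<m. v k p * v k q) * z $ q)" if "p < N" "z \<in> carrier_vec N" for p z
    using that unfolding G_def by (simp add: scalar_prod_def row_def lessThan_atLeast0)
  have dG: "Determinant.det G \<noteq> 0"
  proof
    assume "Determinant.det G = 0"
    then obtain z where z: "z \<in> carrier_vec N" "z \<noteq> 0\<^sub>v N" "G *\<^sub>v z = 0\<^sub>v N"
      using det_0_iff_vec_prod_zero_field[OF G] by auto
    have "(\<Sum>k<m. (\<Sum>p<N. z$p * v k p)^2) = (\<Sum>k<m. \<Sum>p<N. \<Sum>q<N. z$p * (v k p * v k q * z$q))"
      by (simp add: power2_eq_square sum_product mult_ac)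
    also have "\<dots> = (\<Sum>p<N. \<Sum>k<m. \<Sum>q<N. z$p * (v k p * v k q * z$q))"
      by (rule sum.swap)
    also have "\<dots> = (\<Sum>p<N. \<Sum>q<N. \<Sum>k<m. z$p * (v k p * v k q * z$q))"
      by (rule sum.cong[OF refl], rule sum.swap)
    also have "\<dots> = (\<Sum>p<N. z$p * (G *\<^sub>v z) $ p)"
      by (rule sum.cong[OF refl]) (simp add: Gv z(1) sum_distrib_left sum_distrib_right mult_ac)
    also have "\<dots> = 0" using z(3) by simp
    finally have "\<forall>k<m. (\<Sum>p<N. z$p * v k p) = 0"
      by (subst (asm) sum_nonneg_eq_0_iff) auto
    then have "\<forall>p<N. z $ p = 0" using H[rule_format, of "\<lambda>p. z $ p"] by auto
    then have "z = 0\<^sub>v N" using z(1) by (intro eq_vecI) auto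
    with z(2) show False by simp
  qed
  define B where "B = (1 / Determinant.det G) \<cdot>\<^sub>m adj_mat G"
  have B: "B \<in> carrier_mat N N" unfolding B_def using adj_mat(1)[OF G] by simp
  have "G * B = (1 / Determinant.det G) \<cdot>\<^sub>m (G * adj_mat G)"
    unfolding B_def using adj_mat(1)[OF G] G by (simp add: mult_smult_distrib)
  also have "\<dots> = (1 / Determinant.det G) \<cdot>\<^sub>m (Determinant.det G \<cdot>\<^sub>m 1\<^sub>m N)"
    using adj_mat(2)[OF G] by simp
  also have "\<dots> = 1\<^sub>m N" using dG by (intro eq_matI) auto
  finally have GB: "G * B = 1\<^sub>m N" .
  define s where "s = B *\<^sub>v Matrix.vec N w"
  have s: "s \<in> carrier_vec N" unfolding s_def using B by simp
  have "G *\<^sub>v s = (G * B) *\<^sub>v Matrix.vec N w"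
    unfolding s_def using B G by simp
  also have "\<dots> = Matrix.vec N w" unfolding GB by simp
  finally have Gs: "\<And>p. p < N \<Longrightarrow> (G *\<^sub>v s) $ p = w p" by simp
  show ?thesis
  proof (intro exI allI impI)
    fix p assume p: "p < N"
    have "w p = (G *\<^sub>v s) $ p" using Gs[OF p] by simp
    also have "\<dots> = (\<Sum>q<N. \<Sum>k<m. v k p * v k q * s $ q)"
      by (simp add: Gv[OF p s] sum_distrib_right)
    also have "\<dots> = (\<Sum>k<m. \<Sum>q<N. v k p * v k q * s $ q)"
      by (subst sum.swap) simp
    also have "\<dots> = (\<Sum>k<m. ((\<Sum>q<N. v k q * s $ q)) * v k p)"
      by (simp add: sum_divide_distrib sum_distrib_left sum_distrib_right mult_ac)
    finally show "w p = (\<Sum>k<m. ((\<Sum>q<N. v k q * s $ q)) * v k p)" .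
  qed
qed


lemma D_Suc: "i < n \<Longrightarrow> diag_pos n (Suc i) = diag_pos n i + (2*(n-i) - 1)"
proof -
  assume "i < n"
  then obtain k where n: "n = i + k + 1" by (metis add.commute add_Suc less_iff_Suc_add plus_1_eq_Suc)
  have a: "2*n - Suc i = i + 2*k + 1" "2*n - i = i + 2*k + 2" "2*(n-i) - 1 = 2*k+1" using n by auto
  show ?thesis unfolding diag_pos_def a by (simp add: algebra_simps)
qed

lemma D_mono: "i \<le> j \<Longrightarrow> j \<le> n \<Longrightarrow> diag_pos n i \<le> diag_pos n j"
proof (induction j rule: dec_induct)
  case base then show ?case by simp
next
  case (step j) then show ?case using D_Suc[of j n] by simp
qed

lemma D_n: "diag_pos n n = n^2"
  by (simp add: diag_pos_def power2_eq_square)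

lemma blk_lt: "i < n \<Longrightarrow> a < 2*(n-i) - 1 \<Longrightarrow> diag_pos n i + a < diag_pos n (Suc i)"
  using D_Suc by simp

lemma blk_eq_aux: "i < i' \<Longrightarrow> i' < n \<Longrightarrow> a < 2*(n-i) - 1 \<Longrightarrow> diag_pos n i + a \<noteq> diag_pos n i' + a'"
proof -
  assume h: "i < i'" "i' < n" "a < 2*(n-i) - 1"
  have "diag_pos n i + a < diag_pos n (Suc i)" using blk_lt h by simp
  also have "\<dots> \<le> diag_pos n i'" using h by (intro D_mono) auto
  finally show ?thesis by simp
qed

lemma pos_eq: "i < n \<Longrightarrow> i' < n \<Longrightarrow> a < 2*(n-i) - 1 \<Longrightarrow> a' < 2*(n-i') - 1 \<Longrightarrow>
   (diag_pos n i + a = diag_pos n i' + a') = (i = i' \<and> a = a')"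
  using blk_eq_aux[of i i' n a a'] blk_eq_aux[of i' i n a' a]
  by (metis add_left_cancel linorder_neqE_nat)

lemma re_D: "i < j \<Longrightarrow> re_pos n i j = diag_pos n i + (2*(j-i) - 1)"
  unfolding re_pos_def by simp
lemma im_D: "im_pos n i j = diag_pos n i + 2*(j-i)"
  unfolding im_pos_def by simp

lemma pos_neq: "i < n \<Longrightarrow> i' < n \<Longrightarrow> a < 2*(n-i) - 1 \<Longrightarrow> a' < 2*(n-i') - 1 \<Longrightarrow>
   (i \<noteq> i' \<or> a \<noteq> a') \<Longrightarrow> diag_pos n i + a \<noteq> diag_pos n i' + a'"
  using pos_eq by blast

lemma pos_lt: "i < n \<Longrightarrow> a < 2*(n-i) - 1 \<Longrightarrow> diag_pos n i + a < n^2"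
proof -
  assume h: "i < n" "a < 2*(n-i) - 1"
  have "diag_pos n i + a < diag_pos n (Suc i)" using blk_lt h by blast
  also have "\<dots> \<le> diag_pos n n" using h by (intro D_mono) auto
  finally show ?thesis using D_n by simp
qed

lemma off_re: "(i::nat) < j \<Longrightarrow> j < n \<Longrightarrow> 2*(j-i) - 1 < 2*(n-i) - 1" by arith
lemma off_im: "(i::nat) < j \<Longrightarrow> j < n \<Longrightarrow> 2*(j-i) < 2*(n-i) - 1" by arith
lemma off_0: "i < n \<Longrightarrow> (0::nat) < 2*(n-i) - 1" by arith

lemma D_lt: "i < n \<Longrightarrow> diag_pos n i < n^2"
  using pos_lt[OF _ off_0, of i n] by simp
lemma re_lt: "i < j \<Longrightarrow> j < n \<Longrightarrow> re_pos n i j < n^2"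
  unfolding re_D by (rule pos_lt[OF _ off_re]) auto
lemma im_lt: "i < j \<Longrightarrow> j < n \<Longrightarrow> im_pos n i j < n^2"
  unfolding im_D by (rule pos_lt[OF _ off_im]) auto

lemma eqs:
  assumes "i < n" "i' < n"
  shows "(diag_pos n i = diag_pos n i') = (i = i')"
    "i' < j' \<Longrightarrow> j' < n \<Longrightarrow> diag_pos n i \<noteq> re_pos n i' j'"
    "i' < j' \<Longrightarrow> j' < n \<Longrightarrow> diag_pos n i \<noteq> im_pos n i' j'"
    "i < j \<Longrightarrow> j < n \<Longrightarrow> re_pos n i j \<noteq> diag_pos n i'"
    "i < j \<Longrightarrow> j < n \<Longrightarrow> im_pos n i j \<noteq> diag_pos n i'"
    "i < j \<Longrightarrow> j < n \<Longrightarrow> i' < j' \<Longrightarrow> j' < n \<Longrightarrow> (re_pos n i j = re_pos n i' j') = (i = i' \<and> j = j')"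
    "i < j \<Longrightarrow> j < n \<Longrightarrow> i' < j' \<Longrightarrow> j' < n \<Longrightarrow> (im_pos n i j = im_pos n i' j') = (i = i' \<and> j = j')"
    "i < j \<Longrightarrow> j < n \<Longrightarrow> i' < j' \<Longrightarrow> j' < n \<Longrightarrow> re_pos n i j \<noteq> im_pos n i' j'"
    "i < j \<Longrightarrow> j < n \<Longrightarrow> i' < j' \<Longrightarrow> j' < n \<Longrightarrow> im_pos n i j \<noteq> re_pos n i' j'"
proof -
  note A = assms
  show "(diag_pos n i = diag_pos n i') = (i = i')"
    using pos_eq[OF A off_0[OF A(1)] off_0[OF A(2)]] by simp
  show "i' < j' \<Longrightarrow> j' < n \<Longrightarrow> diag_pos n i \<noteq> re_pos n i' j'"
    using pos_neq[OF A off_0[OF A(1)] off_re, of j'] re_D[of i' j' n] by fastforce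
  show "i' < j' \<Longrightarrow> j' < n \<Longrightarrow> diag_pos n i \<noteq> im_pos n i' j'"
    using pos_neq[OF A off_0[OF A(1)] off_im, of j'] im_D[of n i' j'] by fastforce
  show "i < j \<Longrightarrow> j < n \<Longrightarrow> re_pos n i j \<noteq> diag_pos n i'"
    using pos_neq[OF A off_re off_0[OF A(2)], of j] re_D[of i j n] by fastforce
  show "i < j \<Longrightarrow> j < n \<Longrightarrow> im_pos n i j \<noteq> diag_pos n i'"
    using pos_neq[OF A off_im off_0[OF A(2)], of j] im_D[of n i j] by fastforce
  show "i < j \<Longrightarrow> j < n \<Longrightarrow> i' < j' \<Longrightarrow> j' < n \<Longrightarrow> (re_pos n i j = re_pos n i' j') = (i = i' \<and> j = j')"
  proof -
    assume h: "i < j" "j < n" "i' < j'" "j' < n"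
    have e: "(i = i' \<and> 2*(j-i) - 1 = 2*(j'-i') - 1) = (i = i' \<and> j = j')" using h by arith
    show ?thesis using pos_eq[OF A off_re[OF h(1,2)] off_re[OF h(3,4)]] unfolding re_D[OF h(1), of n] re_D[OF h(3), of n] e .
  qed
  show "i < j \<Longrightarrow> j < n \<Longrightarrow> i' < j' \<Longrightarrow> j' < n \<Longrightarrow> (im_pos n i j = im_pos n i' j') = (i = i' \<and> j = j')"
  proof -
    assume h: "i < j" "j < n" "i' < j'" "j' < n"
    show ?thesis using pos_eq[OF A off_im[OF h(1,2)] off_im[OF h(3,4)]] im_D[of n i j] im_D[of n i' j'] h
      by auto
  qed
  show "i < j \<Longrightarrow> j < n \<Longrightarrow> i' < j' \<Longrightarrow> j' < n \<Longrightarrow> re_pos n i j \<noteq> im_pos n i' j'"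
  proof -
    assume h: "i < j" "j < n" "i' < j'" "j' < n"
    have "2*(j-i) - 1 \<noteq> 2*(j'-i')" using h by arith
    then show ?thesis using pos_neq[OF A off_re[OF h(1,2)] off_im[OF h(3,4)]] re_D[OF h(1), of n] im_D[of n i' j']
      by auto
  qed
  show "i < j \<Longrightarrow> j < n \<Longrightarrow> i' < j' \<Longrightarrow> j' < n \<Longrightarrow> im_pos n i j \<noteq> re_pos n i' j'"
  proof -
    assume h: "i < j" "j < n" "i' < j'" "j' < n"
    have "2*(j-i) \<noteq> 2*(j'-i') - 1" using h by arith
    then show ?thesis using pos_neq[OF A off_im[OF h(1,2)] off_re[OF h(3,4)]] im_D[of n i j] re_D[OF h(3), of n]
      by auto
  qed
qed


lemma blocks: "k \<le> n \<Longrightarrow> p < diag_pos n k \<Longrightarrow> \<exists>i<k. diag_pos n i \<le> p \<and> p < diag_pos n (Suc i)"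
proof (induction k arbitrary: p)
  case 0 then show ?case by (simp add: diag_pos_def)
next
  case (Suc k)
  show ?case
  proof (cases "p < diag_pos n k")
    case True
    then obtain i where "i < k" "diag_pos n i \<le> p \<and> p < diag_pos n (Suc i)" using Suc.IH[of p] Suc.prems by auto
    then show ?thesis by (intro exI[of _ i]) auto
  next
    case False then show ?thesis using Suc.prems by (intro exI[of _ k]) auto
  qed
qed

lemma surj_pos: assumes "p < n^2"
  shows "(\<exists>i<n. p = diag_pos n i) \<or> (\<exists>i j. i < j \<and> j < n \<and> (p = re_pos n i j \<or> p = im_pos n i j))"
proof -
  obtain i where i: "i < n" "diag_pos n i \<le> p" "p < diag_pos n (Suc i)"
    using blocks[of n n p] assms D_n by auto
  define a where "a = p - diag_pos n i"
  have p: "p = diag_pos n i + a" using i a_def by simp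
  have a: "a < 2*(n-i) - 1" using i p D_Suc[OF i(1)] by simp
  show ?thesis
  proof (cases "a = 0")
    case True then show ?thesis using p i by auto
  next
    case False
    show ?thesis
    proof (cases "even a")
      case True
      then obtain d where d: "a = 2*d" by blast
      have "i < i + d" "i + d < n" using False a d by auto
      moreover have "p = im_pos n i (i+d)" unfolding im_D p d by simp
      ultimately show ?thesis by blast
    next
      case odd: False
      then obtain d where d: "a = 2*d+1" using oddE by blast
      have "i < i + d + 1" "i + d + 1 < n" using a d by auto
      moreover have "p = re_pos n i (i+d+1)" unfolding re_D[OF \<open>i < i+d+1\<close>] p d by simp
      ultimately show ?thesis by blast
    qed
  qed
qed

definition gen :: "nat \<Rightarrow> (nat \<Rightarrow> real) \<Rightarrow> (nat \<Rightarrow> nat \<Rightarrow> real) \<Rightarrow> (nat \<Rightarrow> nat \<Rightarrow> real) \<Rightarrow> nat \<Rightarrow> real" where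
  "gen n d r s p = (\<Sum>i<n. (if p = diag_pos n i then d i else 0)
      + (\<Sum>j\<in>{i<..<n}. (if p = re_pos n i j then r i j else 0)
                      + (if p = im_pos n i j then s i j else 0)))"

lemma xtilde_gen: "xtilde n u = gen n (\<lambda>i. (cmod (u i))\<^sup>2) (\<lambda>i j. Re (cnj (u i) * u j)) (\<lambda>i j. Im (cnj (u i) * u j))"
  unfolding xtilde_def gen_def by (rule ext) (rule refl)

lemma gen_D: assumes "i < n" shows "gen n d r s (diag_pos n i) = d i"
proof -
  have "gen n d r s (diag_pos n i) = (\<Sum>i'<n. if i' = i then d i else 0)"
    unfolding gen_def
  proof (rule sum.cong[OF refl])
    fix i' assume i': "i' \<in> {..<n}"
    have "(\<Sum>j\<in>{i'<..<n}. (if diag_pos n i = re_pos n i' j then r i' j else 0)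
                      + (if diag_pos n i = im_pos n i' j then s i' j else 0)) = 0"
      using eqs(2,3)[OF assms, of i'] i' by (intro sum.neutral) auto
    then show "(if diag_pos n i = diag_pos n i' then d i' else 0) + (\<Sum>j\<in>{i'<..<n}. (if diag_pos n i = re_pos n i' j then r i' j else 0)
                      + (if diag_pos n i = im_pos n i' j then s i' j else 0)) = (if i' = i then d i else 0)"
      using eqs(1)[OF assms, of i'] i' by auto
  qed
  also have "\<dots> = d i" using assms by simp
  finally show ?thesis .
qed

lemma gen_re: assumes "i < j" "j < n" shows "gen n d r s (re_pos n i j) = r i j"
proof -
  have i: "i < n" using assms by simp
  have "gen n d r s (re_pos n i j) = (\<Sum>i'<n. if i' = i then r i j else 0)"
    unfolding gen_def
  proof (rule sum.cong[OF refl])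
    fix i' assume i': "i' \<in> {..<n}"
    have "(\<Sum>j'\<in>{i'<..<n}. (if re_pos n i j = re_pos n i' j' then r i' j' else 0)
                      + (if re_pos n i j = im_pos n i' j' then s i' j' else 0)) = (\<Sum>j'\<in>{i'<..<n}. if i' = i \<and> j' = j then r i j else 0)"
      using eqs(6,8)[OF i, of i' j] i' assms by (intro sum.cong) auto
    also have "\<dots> = (if i' = i then r i j else 0)" using assms by (auto simp: sum.delta)
    finally show "(if re_pos n i j = diag_pos n i' then d i' else 0) + (\<Sum>j'\<in>{i'<..<n}. (if re_pos n i j = re_pos n i' j' then r i' j' else 0)
                      + (if re_pos n i j = im_pos n i' j' then s i' j' else 0)) = (if i' = i then r i j else 0)"
      using eqs(4)[OF i, of i' j] i' assms by auto
  qed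
  also have "\<dots> = r i j" using i by simp
  finally show ?thesis .
qed

lemma gen_im: assumes "i < j" "j < n" shows "gen n d r s (im_pos n i j) = s i j"
proof -
  have i: "i < n" using assms by simp
  have "gen n d r s (im_pos n i j) = (\<Sum>i'<n. if i' = i then s i j else 0)"
    unfolding gen_def
  proof (rule sum.cong[OF refl])
    fix i' assume i': "i' \<in> {..<n}"
    have "(\<Sum>j'\<in>{i'<..<n}. (if im_pos n i j = re_pos n i' j' then r i' j' else 0)
                      + (if im_pos n i j = im_pos n i' j' then s i' j' else 0)) = (\<Sum>j'\<in>{i'<..<n}. if i' = i \<and> j' = j then s i j else 0)"
      using eqs(7,9)[OF i, of i' j] i' assms by (intro sum.cong) auto
    also have "\<dots> = (if i' = i then s i j else 0)" using assms by (auto simp: sum.delta)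
    finally show "(if im_pos n i j = diag_pos n i' then d i' else 0) + (\<Sum>j'\<in>{i'<..<n}. (if im_pos n i j = re_pos n i' j' then r i' j' else 0)
                      + (if im_pos n i j = im_pos n i' j' then s i' j' else 0)) = (if i' = i then s i j else 0)"
      using eqs(5)[OF i, of i' j] i' assms by auto
  qed
  also have "\<dots> = s i j" using i by simp
  finally show ?thesis .
qed

lemma delta_sum: "(a::nat) < N \<Longrightarrow> (\<Sum>p<N. t p * (if p = a then c else 0)) = t a * (c::real)"
proof -
  assume a: "a < N"
  have "(\<Sum>p<N. t p * (if p = a then c else 0)) = (\<Sum>p<N. if p = a then t a * c else 0)"
    by (rule sum.cong) auto
  also have "\<dots> = (if a \<in> {..<N} then t a * c else 0)" by (rule sum.delta) simp
  finally show ?thesis using a by simp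
qed

lemma F1: "(\<Sum>p<n^2. t p * gen n d r s p) =
   (\<Sum>i<n. t (diag_pos n i) * d i + (\<Sum>j\<in>{i<..<n}. t (re_pos n i j) * r i j + t (im_pos n i j) * s i j))"
proof -
  have "(\<Sum>p<n^2. t p * gen n d r s p) = (\<Sum>p<n^2. \<Sum>i<n. t p * (if p = diag_pos n i then d i else 0)
      + (\<Sum>j\<in>{i<..<n}. t p * (if p = re_pos n i j then r i j else 0) + t p * (if p = im_pos n i j then s i j else 0)))"
    unfolding gen_def by (simp add: sum_distrib_left distrib_left)
  also have "\<dots> = (\<Sum>i<n. \<Sum>p<n^2. t p * (if p = diag_pos n i then d i else 0)
      + (\<Sum>j\<in>{i<..<n}. t p * (if p = re_pos n i j then r i j else 0) + t p * (if p = im_pos n i j then s i j else 0)))"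
    by (rule sum.swap)
  also have "\<dots> = (\<Sum>i<n. (\<Sum>p<n^2. t p * (if p = diag_pos n i then d i else 0))
      + (\<Sum>j\<in>{i<..<n}. (\<Sum>p<n^2. t p * (if p = re_pos n i j then r i j else 0)) + (\<Sum>p<n^2. t p * (if p = im_pos n i j then s i j else 0))))"
    by (simp add: sum.distrib sum.swap[of _ "{..<n^2}"])
  also have "\<dots> = (\<Sum>i<n. t (diag_pos n i) * d i + (\<Sum>j\<in>{i<..<n}. t (re_pos n i j) * r i j + t (im_pos n i j) * s i j))"
    by (intro sum.cong refl arg_cong2[where f="(+)"]) (auto simp: delta_sum D_lt re_lt im_lt)
  finally show ?thesis .
qed



lemma tri: fixes f :: "nat \<Rightarrow> nat \<Rightarrow> 'a::comm_monoid_add"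
  shows "(\<Sum>i<n. \<Sum>j<n. f i j) = (\<Sum>i<n. f i i + (\<Sum>j\<in>{i<..<n}. f i j + f j i))"
proof (induction n)
  case 0 then show ?case by simp
next
  case (Suc n)
  have e: "\<And>i. i < n \<Longrightarrow> {i<..<Suc n} = insert n {i<..<n}" by auto
  have "(\<Sum>i<Suc n. \<Sum>j<Suc n. f i j) = (\<Sum>i<n. \<Sum>j<n. f i j) + ((\<Sum>i<n. f i n + f n i) + f n n)"
    by (simp add: sum.distrib add_ac)
  also have "\<dots> = (\<Sum>i<n. f i i + (\<Sum>j\<in>{i<..<n}. f i j + f j i) + (f i n + f n i)) + f n n"
    unfolding Suc.IH by (simp add: sum.distrib add_ac)
  also have "\<dots> = (\<Sum>i<n. f i i + (\<Sum>j\<in>{i<..<Suc n}. f i j + f j i)) + f n n"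
  proof -
    have "\<And>i. i \<in> {..<n} \<Longrightarrow> f i i + (\<Sum>j\<in>{i<..<n}. f i j + f j i) + (f i n + f n i) = f i i + (\<Sum>j\<in>{i<..<Suc n}. f i j + f j i)"
      using e by (simp add: add_ac)
    then show ?thesis by (metis (no_types, lifting) sum.cong)
  qed
  also have "\<dots> = (\<Sum>i<Suc n. f i i + (\<Sum>j\<in>{i<..<Suc n}. f i j + f j i))"
  proof -
    have "{n<..<Suc n} = {}" by auto
    then show ?thesis by simp
  qed
  finally show ?case .
qed

definition KK :: "nat \<Rightarrow> (nat \<Rightarrow> nat \<Rightarrow> complex) \<Rightarrow> (nat \<Rightarrow> complex) \<Rightarrow> real" where
  "KK n T u = (\<Sum>i<n. Re (T i i) * (cmod (u i))\<^sup>2 + (\<Sum>j\<in>{i<..<n}.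
       (2 * Re (T i j)) * Re (cnj (u i) * u j) + (- 2 * Im (T i j)) * Im (cnj (u i) * u j)))"

lemma QF: assumes "self_adjoint_n n T"
  shows "cinner_n n (mat_apply n T u) u = complex_of_real (KK n T u)"
proof -
  have sa: "\<And>i j. i < n \<Longrightarrow> j < n \<Longrightarrow> T j i = cnj (T i j)"
  proof -
    fix i j assume "i < n" "j < n"
    then have "T i j = cnj (T j i)" using assms unfolding self_adjoint_n_def by blast
    then show "T j i = cnj (T i j)" by simp
  qed
  have "cinner_n n (mat_apply n T u) u = (\<Sum>i<n. \<Sum>j<n. T i j * u j * cnj (u i))"
    unfolding cinner_n_def mat_apply_def by (simp only: sum_distrib_right)
  also have "\<dots> = (\<Sum>i<n. T i i * u i * cnj (u i) + (\<Sum>j\<in>{i<..<n}. T i j * u j * cnj (u i) + T j i * u i * cnj (u j)))"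
    by (rule tri)
  also have "\<dots> = (\<Sum>i<n. complex_of_real (Re (T i i) * (cmod (u i))\<^sup>2 + (\<Sum>j\<in>{i<..<n}.
       (2 * Re (T i j)) * Re (cnj (u i) * u j) + (- 2 * Im (T i j)) * Im (cnj (u i) * u j))))"
  proof (rule sum.cong[OF refl])
    fix i assume i: "i \<in> {..<n}"
    have Tii: "T i i = complex_of_real (Re (T i i))"
    proof -
      have "Im (T i i) = Im (cnj (T i i))" using sa[of i i] i by (metis lessThan_iff)
      then have "Im (T i i) = 0" by simp
      then show ?thesis by (simp add: complex_eq_iff)
    qed
    have uu: "u i * cnj (u i) = complex_of_real ((cmod (u i))\<^sup>2)"
      by (metis complex_norm_square of_real_power)
    have d: "T i i * u i * cnj (u i) = complex_of_real (Re (T i i) * (cmod (u i))\<^sup>2)"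
    proof -
      have "T i i * u i * cnj (u i) = T i i * (u i * cnj (u i))" by (rule mult.assoc)
      also have "\<dots> = complex_of_real (Re (T i i)) * complex_of_real ((cmod (u i))\<^sup>2)" using Tii uu by metis
      finally show ?thesis by (metis of_real_mult)
    qed
    have o: "(\<Sum>j\<in>{i<..<n}. T i j * u j * cnj (u i) + T j i * u i * cnj (u j)) =
        (\<Sum>j\<in>{i<..<n}. complex_of_real ((2 * Re (T i j)) * Re (cnj (u i) * u j) + (- 2 * Im (T i j)) * Im (cnj (u i) * u j)))"
    proof (rule sum.cong[OF refl])
      fix j assume j: "j \<in> {i<..<n}"
      then have Tji: "T j i = cnj (T i j)" using sa[of i j] i by simp
      define a where "a = T i j * (cnj (u i) * u j)"
      have z: "T i j * u j * cnj (u i) = a" unfolding a_def by (simp add: mult_ac)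
      have w: "T j i * u i * cnj (u j) = cnj a" unfolding a_def Tji by (simp add: mult_ac)
      have ra: "Re a = Re (T i j) * Re (cnj (u i) * u j) - Im (T i j) * Im (cnj (u i) * u j)"
        unfolding a_def by (simp only: times_complex.sel(1))
      have "a + cnj a = complex_of_real (2 * Re a)" by (rule complex_add_cnj)
      also have "2 * Re a = (2 * Re (T i j)) * Re (cnj (u i) * u j) + (- 2 * Im (T i j)) * Im (cnj (u i) * u j)"
        unfolding ra by (simp add: algebra_simps)
      finally have "a + cnj a = complex_of_real ((2 * Re (T i j)) * Re (cnj (u i) * u j) + (- 2 * Im (T i j)) * Im (cnj (u i) * u j))" .
      then show "T i j * u j * cnj (u i) + T j i * u i * cnj (u j) =
         complex_of_real ((2 * Re (T i j)) * Re (cnj (u i) * u j) + (- 2 * Im (T i j)) * Im (cnj (u i) * u j))"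
        unfolding z w .
    qed
    show "T i i * u i * cnj (u i) + (\<Sum>j\<in>{i<..<n}. T i j * u j * cnj (u i) + T j i * u i * cnj (u j)) =
      complex_of_real (Re (T i i) * (cmod (u i))\<^sup>2 + (\<Sum>j\<in>{i<..<n}.
       (2 * Re (T i j)) * Re (cnj (u i) * u j) + (- 2 * Im (T i j)) * Im (cnj (u i) * u j)))"
      unfolding d o by simp
  qed
  also have "\<dots> = complex_of_real (KK n T u)" unfolding KK_def by simp
  finally show ?thesis .
qed



theorem mainTheorem2:
  fixes n m :: nat and x :: "nat \<Rightarrow> nat \<Rightarrow> complex"
  assumes "is_frame n m x"
  shows "injective_family n m x \<longleftrightarrow> spans_Rn2 n m (\<lambda>k. xtilde n (x k))"
proof
  assume inj: "injective_family n m x"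
  show "spans_Rn2 n m (\<lambda>k. xtilde n (x k))"
    unfolding spans_Rn2_def
  proof (intro allI impI)
    fix w :: "nat \<Rightarrow> real"
    have H: "\<forall>t. (\<forall>k<m. (\<Sum>p<n^2. t p * xtilde n (x k) p) = 0) \<longrightarrow> (\<forall>p<n^2. t p = 0)"
    proof (rule allI, rule impI)
      fix t :: "nat \<Rightarrow> real" assume ht: "\<forall>k<m. (\<Sum>p<n^2. t p * xtilde n (x k) p) = 0"
      define T where "T = (\<lambda>i j. if i = j then Complex (t (diag_pos n i)) 0
         else if i < j then Complex (t (re_pos n i j) / 2) (- t (im_pos n i j) / 2)
         else Complex (t (re_pos n j i) / 2) (t (im_pos n j i) / 2))"
      have sa: "self_adjoint_n n T" unfolding self_adjoint_n_def T_def
        by (auto simp: complex_eq_iff)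
      have KT: "KK n T u = (\<Sum>p<n^2. t p * xtilde n u p)" for u
        unfolding xtilde_gen F1 KK_def
        by (intro sum.cong refl arg_cong2[where f="(+)"]) (auto simp: T_def)
      have cin: "\<forall>k<m. cinner_n n (mat_apply n T (x k)) (x k) = 0"
      proof (intro allI impI)
        fix k assume k: "k < m"
        have "KK n T (x k) = 0" using KT[of "x k"] ht k by simp
        then show "cinner_n n (mat_apply n T (x k)) (x k) = 0" unfolding QF[OF sa] by simp
      qed
      have I: "self_adjoint_n n T \<longrightarrow> (\<forall>k<m. cinner_n n (mat_apply n T (x k)) (x k) = 0) \<longrightarrow> (\<forall>i<n. \<forall>j<n. T i j = 0)"
        using inj unfolding injective_family_def by (rule spec)
      have T0: "\<forall>i<n. \<forall>j<n. T i j = 0" by (rule mp[OF mp[OF I sa] cin])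
      show "\<forall>p<n^2. t p = 0"
      proof (intro allI impI)
        fix p assume "p < n^2"
        from surj_pos[OF this] consider (d) i where "i < n" "p = diag_pos n i"
          | (r) i j where "i < j" "j < n" "p = re_pos n i j"
          | (m) i j where "i < j" "j < n" "p = im_pos n i j"
          by blast
        then show "t p = 0"
        proof cases
          case (d i)
          then have "T i i = 0" using T0 by auto
          moreover have "T i i = Complex (t (diag_pos n i)) 0" unfolding T_def by simp
          ultimately show ?thesis using d by (simp add: complex_eq_iff)
        next
          case (r i j)
          then have "T i j = 0" using T0 by auto
          moreover have "T i j = Complex (t (re_pos n i j) / 2) (- t (im_pos n i j) / 2)" unfolding T_def using r by simp
          ultimately show ?thesis using r by (simp add: complex_eq_iff)
        next
          case (m i j)
          then have "T i j = 0" using T0 by auto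
          moreover have "T i j = Complex (t (re_pos n i j) / 2) (- t (im_pos n i j) / 2)" unfolding T_def using m by simp
          ultimately show ?thesis using m by (simp add: complex_eq_iff)
        qed
      qed
    qed
    from LA[OF H] show "\<exists>c. \<forall>p<n^2. w p = (\<Sum>k<m. c k * xtilde n (x k) p)" .
  qed
next
  assume sp: "spans_Rn2 n m (\<lambda>k. xtilde n (x k))"
  show "injective_family n m x"
    unfolding injective_family_def
  proof (rule allI, rule impI, rule impI)
    fix T assume sa: "self_adjoint_n n T" and hk: "\<forall>k<m. cinner_n n (mat_apply n T (x k)) (x k) = 0"
    define t where "t = gen n (\<lambda>i. Re (T i i)) (\<lambda>i j. 2 * Re (T i j)) (\<lambda>i j. - 2 * Im (T i j))"
    have KT: "(\<Sum>p<n^2. t p * xtilde n u p) = KK n T u" for u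
      unfolding xtilde_gen F1 KK_def t_def
      by (intro sum.cong refl arg_cong2[where f="(+)"]) (auto simp: gen_D gen_re gen_im)
    have orth: "\<forall>k<m. (\<Sum>p<n^2. t p * xtilde n (x k) p) = 0"
    proof (intro allI impI)
      fix k assume k: "k < m"
      then have "complex_of_real (KK n T (x k)) = 0" using QF[OF sa, of "x k"] hk by simp
      then show "(\<Sum>p<n^2. t p * xtilde n (x k) p) = 0" using KT[of "x k"] by simp
    qed
    obtain c where c: "\<forall>p<n^2. (if p < n^2 then t p else 0) = (\<Sum>k<m. c k * xtilde n (x k) p)"
    proof -
      have "\<exists>c. \<forall>p<n^2. (if p < n^2 then t p else 0) = (\<Sum>k<m. c k * xtilde n (x k) p)"
        using sp[unfolded spans_Rn2_def, rule_format, of "\<lambda>p. if p < n^2 then t p else 0"] by simp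
      then show ?thesis using that by blast
    qed
    have "(\<Sum>p<n^2. t p * t p) = (\<Sum>p<n^2. t p * (\<Sum>k<m. c k * xtilde n (x k) p))"
      using c by (intro sum.cong) auto
    also have "\<dots> = (\<Sum>p<n^2. \<Sum>k<m. c k * (t p * xtilde n (x k) p))"
      by (simp add: sum_distrib_left mult_ac)
    also have "\<dots> = (\<Sum>k<m. \<Sum>p<n^2. c k * (t p * xtilde n (x k) p))"
      by (rule sum.swap)
    also have "\<dots> = (\<Sum>k<m. c k * (\<Sum>p<n^2. t p * xtilde n (x k) p))"
      by (simp add: sum_distrib_left)
    also have "\<dots> = 0" using orth by simp
    finally have "(\<Sum>p<n^2. t p * t p) = 0" .
    then have t0: "\<forall>p<n^2. t p = 0"
      by (subst (asm) sum_nonneg_eq_0_iff) auto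
    show "\<forall>i<n. \<forall>j<n. T i j = 0"
    proof (intro allI impI)
      fix i j assume i: "i < n" and j: "j < n"
      have diag: "T k k = 0" if "k < n" for k
      proof -
        have "Re (T k k) = t (diag_pos n k)" unfolding t_def by (subst gen_D[OF that]) (rule refl)
        then have "Re (T k k) = 0" using t0 D_lt[OF that] by simp
        moreover have "T k k = cnj (T k k)" using sa that unfolding self_adjoint_n_def by blast
        then have "Im (T k k) = Im (cnj (T k k))" by (rule arg_cong)
        ultimately show ?thesis by (simp add: complex_eq_iff)
      qed
      have up: "T a b = 0" if "a < b" "b < n" for a b
      proof -
        have "2 * Re (T a b) = t (re_pos n a b)" unfolding t_def by (subst gen_re[OF that]) (rule refl)
        then have "2 * Re (T a b) = 0" using t0 re_lt[OF that] by simp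
        moreover have "- 2 * Im (T a b) = t (im_pos n a b)" unfolding t_def by (subst gen_im[OF that]) (rule refl)
        then have "- 2 * Im (T a b) = 0" using t0 im_lt[OF that] by simp
        ultimately show ?thesis by (simp add: complex_eq_iff)
      qed
      consider "i = j" | "i < j" | "j < i" by arith
      then show "T i j = 0"
      proof cases
        case 1 then show ?thesis using diag i by simp
      next
        case 2 then show ?thesis using up j by simp
      next
        case 3
        have "T i j = cnj (T j i)" using sa i j unfolding self_adjoint_n_def by blast
        then show ?thesis using up[OF 3 i] by simp
      qed
    qed
  qed
qed

end
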